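(* Let $K_{m_1,m_2}$ be the complete bipartite graph with bipartition $(X,Y)$, $X=\{x_1,\dots,x_{m_1}\}$, $Y=\{y_1,\dots,y_{m_2}\}$, where $2\le m_1\le m_2$. Let $s$ and $i$ be integers with $\max\{1,s-m_2\}\le i\le \min\{m_1,s-1\}$ and $s\ge m_2-m_1+3$, and let $S_i=\{x_1,\dots,x_i,y_1,\dots,y_{s-i}\}$. If $2\le 2i\le m_1+s-m_2$, then $$\kappa^*_{K_{m_1,m_2}}(S_i)\ge\begin{cases} m_1-i, & \text{if } 2\le 2i\le \frac{2(m_1+s-m_2)}{3},\\[2pt] m_2-(s-i)+\left\lfloor\frac{m_1+s-m_2-i}{2}\right\rfloor, & \text{if } \frac{2(m_1+s-m_2)}{3}<2i\le m_1+s-m_2.\end{cases}$$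
   Context: For $S\subseteq V(G)$ with $|S|\ge 2$, an $S$-Steiner tree of $G$ is a subtree $T$ of $G$ with $S\subseteq V(T)$ all of whose leaves belong to $S$. A family of $S$-Steiner trees $T_1,\dots,T_k$ is completely independent if for all $1\le p<q\le k$: $E(T_p)\cap E(T_q)=\emptyset$, $V(T_p)\cap V(T_q)=S$, and for any two vertices $x_1,x_2\in S$ the $(x_1,x_2)$-paths in $T_p$ and in $T_q$ are internally disjoint. $\kappa^*_G(S)$ is the maximum number of trees in a completely independent family of $S$-Steiner trees in $G$. *)

theory Defs
  imports Complex_Main
begin

type_synonym 'a graph = "'a set \<times> 'a set set"

definition verts :: "'a graph \<Rightarrow> 'a set" where "verts G = fst G"
definition edges :: "'a graph \<Rightarrow> 'a set set" where "edges G = snd G"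

definition simple_graph :: "'a graph \<Rightarrow> bool" where
  "simple_graph G \<longleftrightarrow> finite (verts G) \<and>
     (\<forall>e\<in>edges G. \<exists>u v. e = {u, v} \<and> u \<noteq> v \<and> u \<in> verts G \<and> v \<in> verts G)"

text \<open>Complete bipartite graph K_{m1,m2}: X = Inl ` {1..m1}, Y = Inr ` {1..m2}.\<close>
definition Kbip :: "nat \<Rightarrow> nat \<Rightarrow> (nat + nat) graph" where
  "Kbip m1 m2 = (Inl ` {1..m1} \<union> Inr ` {1..m2},
                 {{Inl a, Inr b} | a b. a \<in> {1..m1} \<and> b \<in> {1..m2}})"

definition is_path :: "'a graph \<Rightarrow> 'a \<Rightarrow> 'a \<Rightarrow> 'a list \<Rightarrow> bool" where
  "is_path H x y xs \<longleftrightarrow> xs \<noteq> [] \<and> distinct xs \<and> hd xs = x \<and> last xs = y \<and>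
     set xs \<subseteq> verts H \<and> (\<forall>j. Suc j < length xs \<longrightarrow> {xs ! j, xs ! Suc j} \<in> edges H)"

definition is_cycle :: "'a graph \<Rightarrow> 'a list \<Rightarrow> bool" where
  "is_cycle H xs \<longleftrightarrow> length xs \<ge> 3 \<and> distinct xs \<and> set xs \<subseteq> verts H \<and>
     (\<forall>j. Suc j < length xs \<longrightarrow> {xs ! j, xs ! Suc j} \<in> edges H) \<and> {last xs, hd xs} \<in> edges H"

definition subgraph :: "'a graph \<Rightarrow> 'a graph \<Rightarrow> bool" where
  "subgraph T G \<longleftrightarrow> verts T \<subseteq> verts G \<and> edges T \<subseteq> edges G \<and> (\<forall>e\<in>edges T. e \<subseteq> verts T)"

definition subtree :: "'a graph \<Rightarrow> 'a graph \<Rightarrow> bool" where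
  "subtree T G \<longleftrightarrow> subgraph T G \<and> verts T \<noteq> {} \<and>
     (\<forall>x\<in>verts T. \<forall>y\<in>verts T. \<exists>xs. is_path T x y xs) \<and> \<not> (\<exists>xs. is_cycle T xs)"

definition degree :: "'a graph \<Rightarrow> 'a \<Rightarrow> nat" where
  "degree H v = card {e \<in> edges H. v \<in> e}"

definition steiner_tree :: "'a graph \<Rightarrow> 'a set \<Rightarrow> 'a graph \<Rightarrow> bool" where
  "steiner_tree G S T \<longleftrightarrow> subtree T G \<and> S \<subseteq> verts T \<and>
     (\<forall>v\<in>verts T. degree T v = 1 \<longrightarrow> v \<in> S)"

definition interior :: "'a list \<Rightarrow> 'a set" where
  "interior xs = set xs - {hd xs, last xs}"

definition completely_independent :: "'a graph \<Rightarrow> 'a set \<Rightarrow> nat \<Rightarrow> (nat \<Rightarrow> 'a graph) \<Rightarrow> bool" where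
  "completely_independent G S k Ts \<longleftrightarrow>
     (\<forall>p<k. steiner_tree G S (Ts p)) \<and>
     (\<forall>p<k. \<forall>q<k. p < q \<longrightarrow>
        edges (Ts p) \<inter> edges (Ts q) = {} \<and>
        verts (Ts p) \<inter> verts (Ts q) = S \<and>
        (\<forall>x1\<in>S. \<forall>x2\<in>S. \<forall>xs ys. is_path (Ts p) x1 x2 xs \<longrightarrow> is_path (Ts q) x1 x2 ys \<longrightarrow>
            interior xs \<inter> interior ys = {}))"

definition kappa_star :: "'a graph \<Rightarrow> 'a set \<Rightarrow> nat" where
  "kappa_star G S = Sup {k. \<exists>Ts. completely_independent G S k Ts}"

end

theory Submission
  imports Defs
begin


definition attach :: "'a graph \<Rightarrow> 'a set \<Rightarrow> 'a \<Rightarrow> 'a graph" where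
  "attach T P w = (verts T \<union> P, edges T \<union> (\<lambda>v. {v, w}) ` P)"

lemma verts_pair[simp]: "verts (V, E) = V" by (simp add: verts_def)
lemma edges_pair[simp]: "edges (V, E) = E" by (simp add: edges_def)
lemma verts_attach[simp]: "verts (attach T P w) = verts T \<union> P" by (simp add: attach_def)
lemma edges_attach[simp]: "edges (attach T P w) = edges T \<union> (\<lambda>v. {v, w}) ` P" by (simp add: attach_def)

lemma is_path_mono: "is_path T x y xs \<Longrightarrow> verts T \<subseteq> verts T' \<Longrightarrow> edges T \<subseteq> edges T' \<Longrightarrow> is_path T' x y xs"
  unfolding is_path_def by blast

lemma is_path_snoc:
  assumes "is_path T x w xs" "v \<notin> set xs" "v \<in> verts T'" "{w, v} \<in> edges T'"
    "verts T \<subseteq> verts T'" "edges T \<subseteq> edges T'"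
  shows "is_path T' x v (xs @ [v])"
  unfolding is_path_def
proof (intro conjI allI impI)
  have p: "xs \<noteq> []" "distinct xs" "hd xs = x" "last xs = w" "set xs \<subseteq> verts T"
    "\<And>j. Suc j < length xs \<Longrightarrow> {xs ! j, xs ! Suc j} \<in> edges T"
    using assms(1) unfolding is_path_def by auto
  show "xs @ [v] \<noteq> []" "distinct (xs @ [v])" "hd (xs @ [v]) = x" "last (xs @ [v]) = v"
    "set (xs @ [v]) \<subseteq> verts T'" using p assms by auto
  fix j assume j: "Suc j < length (xs @ [v])"
  show "{(xs @ [v]) ! j, (xs @ [v]) ! Suc j} \<in> edges T'"
  proof (cases "Suc j < length xs")
    case True thus ?thesis using p(6)[OF True] assms(6) by (auto simp: nth_append)
  next
    case False
    hence "j = length xs - 1" "Suc j = length xs" using j by auto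
    moreover have "xs ! (length xs - 1) = w" using p(1,4) by (simp add: last_conv_nth)
    ultimately show ?thesis using assms(4) p(1) by (auto simp: nth_append)
  qed
qed

lemma is_path_cons:
  assumes "is_path T w y xs" "v \<notin> set xs" "v \<in> verts T'" "{v, w} \<in> edges T'"
    "verts T \<subseteq> verts T'" "edges T \<subseteq> edges T'"
  shows "is_path T' v y (v # xs)"
  unfolding is_path_def
proof (intro conjI allI impI)
  have p: "xs \<noteq> []" "distinct xs" "hd xs = w" "last xs = y" "set xs \<subseteq> verts T"
    "\<And>j. Suc j < length xs \<Longrightarrow> {xs ! j, xs ! Suc j} \<in> edges T"
    using assms(1) unfolding is_path_def by auto
  show "v # xs \<noteq> []" "distinct (v # xs)" "hd (v # xs) = v" "last (v # xs) = y"
    "set (v # xs) \<subseteq> verts T'" using p assms by auto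
  fix j assume j: "Suc j < length (v # xs)"
  show "{(v # xs) ! j, (v # xs) ! Suc j} \<in> edges T'"
  proof (cases j)
    case 0 thus ?thesis using assms(4) p(1,3) by (simp add: hd_conv_nth)
  next
    case (Suc j') thus ?thesis using p(6)[of j'] j assms(6) by auto
  qed
qed

lemma cycle_two_nbrs:
  assumes "is_cycle H xs" "z \<in> set xs"
  shows "\<exists>a b. a \<noteq> b \<and> {z, a} \<in> edges H \<and> {z, b} \<in> edges H"
proof -
  have c: "length xs \<ge> 3" "distinct xs" "\<And>j. Suc j < length xs \<Longrightarrow> {xs ! j, xs ! Suc j} \<in> edges H"
    "{last xs, hd xs} \<in> edges H" using assms(1) unfolding is_cycle_def by auto
  let ?n = "length xs"
  obtain j where j: "j < ?n" "z = xs ! j" using assms(2) by (metis in_set_conv_nth)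
  have ne: "xs \<noteq> []" using c(1) by auto
  have hd: "hd xs = xs ! 0" and lst: "last xs = xs ! (?n - 1)"
    by (simp_all add: hd_conv_nth[OF ne] last_conv_nth[OF ne])
  show ?thesis
  proof (cases "j = 0")
    case True
    have "xs ! 1 \<noteq> xs ! (?n - 1)" using c(1,2) by (simp add: nth_eq_iff_index_eq)
    moreover have "{z, xs ! 1} \<in> edges H" using c(3)[of 0] c(1) True j by simp
    moreover have "{z, xs ! (?n - 1)} \<in> edges H" using c(4) True j hd lst by (simp add: insert_commute)
    ultimately show ?thesis by blast
  next
    case False
    have e1: "{z, xs ! (j - 1)} \<in> edges H" using c(3)[of "j - 1"] False j by (simp add: insert_commute)
    show ?thesis
    proof (cases "Suc j < ?n")
      case True
      have "xs ! (j - 1) \<noteq> xs ! Suc j" using c(2) True by (simp add: nth_eq_iff_index_eq)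
      moreover have "{z, xs ! Suc j} \<in> edges H" using c(3)[OF True] j by simp
      ultimately show ?thesis using e1 by blast
    next
      case False2: False
      hence jn: "j = ?n - 1" using j by auto
      have "xs ! (j - 1) \<noteq> xs ! 0" using c(1,2) jn False by (subst nth_eq_iff_index_eq) auto
      moreover have "{z, xs ! 0} \<in> edges H" using c(4) jn j hd lst by simp
      ultimately show ?thesis using e1 by blast
    qed
  qed
qed

lemma interior_two_nbrs:
  assumes "is_path H x y xs" "z \<in> interior xs"
  shows "\<exists>a b. a \<noteq> b \<and> {z, a} \<in> edges H \<and> {z, b} \<in> edges H"
proof -
  have p: "xs \<noteq> []" "distinct xs" "\<And>j. Suc j < length xs \<Longrightarrow> {xs ! j, xs ! Suc j} \<in> edges H"
    using assms(1) unfolding is_path_def by auto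
  let ?n = "length xs"
  obtain j where j: "j < ?n" "z = xs ! j" using assms(2) unfolding interior_def by (metis DiffD1 in_set_conv_nth)
  have "j \<noteq> 0" using assms(2) j p(1) unfolding interior_def by (cases j) (auto simp: hd_conv_nth)
  moreover have "j \<noteq> ?n - 1" using assms(2) j p(1) unfolding interior_def by (auto simp: last_conv_nth)
  ultimately have jj: "0 < j" "Suc j < ?n" using j by auto
  have "xs ! (j - 1) \<noteq> xs ! Suc j" using p(2) jj by (simp add: nth_eq_iff_index_eq)
  moreover have "{z, xs ! Suc j} \<in> edges H" using p(3)[OF jj(2)] j by simp
  moreover have "{z, xs ! (j - 1)} \<in> edges H" using p(3)[of "j - 1"] jj j by (simp add: insert_commute)
  ultimately show ?thesis by blast
qed

lemma subtree_single: "x \<in> verts G \<Longrightarrow> subtree ({x}, {}) G"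
  unfolding subtree_def subgraph_def
proof (intro conjI ballI)
  fix a b assume "x \<in> verts G" "a \<in> verts ({x}, {})" "b \<in> verts ({x}, {})"
  thus "\<exists>xs. is_path ({x}, {}) a b xs" by (intro exI[of _ "[x]"]) (auto simp: is_path_def)
next
  show "\<not> (\<exists>xs. is_cycle ({x}, {}) xs)"
  proof
    assume "\<exists>xs. is_cycle ({x}, {}) xs"
    then obtain xs where "is_cycle ({x}, {}) xs" by blast
    thus False unfolding is_cycle_def by auto
  qed
qed auto

lemma subtree_pend:
  assumes T: "subtree T G" and v: "v \<notin> verts T" and w: "w \<in> verts T"
    and vG: "v \<in> verts G" and eG: "{v, w} \<in> edges G"
  shows "subtree (insert v (verts T), insert {v, w} (edges T)) G"
proof -
  let ?T = "(insert v (verts T), insert {v, w} (edges T))"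
  have sg: "verts T \<subseteq> verts G" "edges T \<subseteq> edges G" "\<forall>e\<in>edges T. e \<subseteq> verts T"
    and conn: "\<forall>x\<in>verts T. \<forall>y\<in>verts T. \<exists>xs. is_path T x y xs"
    and nc: "\<not> (\<exists>xs. is_cycle T xs)"
    using T unfolding subtree_def subgraph_def by auto
  have sub: "verts T \<subseteq> verts ?T" "edges T \<subseteq> edges ?T" by auto
  have pathv: "\<And>xs a b. is_path T a b xs \<Longrightarrow> v \<notin> set xs"
    using v unfolding is_path_def by auto
  have "\<exists>xs. is_path ?T x y xs" if x: "x \<in> verts ?T" and y: "y \<in> verts ?T" for x y
  proof (cases "x = v")
    case True
    show ?thesis
    proof (cases "y = v")
      case True
      thus ?thesis using \<open>x = v\<close> by (intro exI[of _ "[v]"]) (auto simp: is_path_def)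
    next
      case False
      hence "y \<in> verts T" using y by auto
      then obtain xs where "is_path T w y xs" using conn w by blast
      thus ?thesis using is_path_cons[OF _ pathv _ _ sub] \<open>x = v\<close> by fastforce
    qed
  next
    case False
    hence xT: "x \<in> verts T" using x by auto
    show ?thesis
    proof (cases "y = v")
      case True
      obtain xs where "is_path T x w xs" using conn w xT by blast
      thus ?thesis using is_path_snoc[OF _ pathv _ _ sub] True by (fastforce simp: insert_commute)
    next
      case False
      hence "y \<in> verts T" using y by auto
      then obtain xs where "is_path T x y xs" using conn xT by blast
      thus ?thesis using is_path_mono[OF _ sub] by blast
    qed
  qed
  moreover have "\<not> (\<exists>xs. is_cycle ?T xs)"
  proof
    assume "\<exists>xs. is_cycle ?T xs"
    then obtain xs where cyc: "is_cycle ?T xs" by blast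
    show False
    proof (cases "v \<in> set xs")
      case True
      obtain a b where ab: "a \<noteq> b" "{v, a} \<in> edges ?T" "{v, b} \<in> edges ?T"
        using cycle_two_nbrs[OF cyc True] by blast
      have "\<And>c. {v, c} \<in> edges ?T \<Longrightarrow> c = w"
      proof -
        fix c assume "{v, c} \<in> edges ?T"
        moreover have "{v, c} \<notin> edges T" using sg(3) v by blast
        ultimately have "{v, c} = {v, w}" by auto
        moreover have "v \<noteq> w" using v w by auto
        ultimately show "c = w" by (metis doubleton_eq_iff)
      qed
      thus False using ab by metis
    next
      case False
      have c: "length xs \<ge> 3" "distinct xs" "set xs \<subseteq> verts ?T"
        "\<And>j. Suc j < length xs \<Longrightarrow> {xs ! j, xs ! Suc j} \<in> edges ?T"
        "{last xs, hd xs} \<in> edges ?T" using cyc unfolding is_cycle_def by auto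
      have ne: "xs \<noteq> []" using c(1) by auto
      have "is_cycle T xs" unfolding is_cycle_def
      proof (intro conjI allI impI)
        show "set xs \<subseteq> verts T" using c(3) False by auto
        fix j assume j: "Suc j < length xs"
        have "v \<notin> {xs ! j, xs ! Suc j}" using False j by (metis Suc_lessD insertE nth_mem singletonD)
        thus "{xs ! j, xs ! Suc j} \<in> edges T" using c(4)[OF j] by auto
      next
        have "v \<notin> {last xs, hd xs}" using False ne by auto
        thus "{last xs, hd xs} \<in> edges T" using c(5) by auto
      qed (use c in auto)
      thus False using nc by blast
    qed
  qed
  moreover have "subgraph ?T G" using sg vG eG w unfolding subgraph_def by auto
  ultimately show ?thesis unfolding subtree_def by auto
qed

lemma subtree_attach:
  assumes "finite P"
  shows "subtree T G \<Longrightarrow> P \<inter> verts T = {} \<Longrightarrow> (P \<noteq> {} \<Longrightarrow> w \<in> verts T) \<Longrightarrow>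
    (\<And>v. v \<in> P \<Longrightarrow> v \<in> verts G \<and> {v, w} \<in> edges G) \<Longrightarrow> subtree (attach T P w) G"
  using assms
proof (induction P rule: finite_induct)
  case empty
  have "attach T {} w = T" by (simp add: attach_def verts_def edges_def)
  thus ?case using empty by simp
next
  case (insert v P)
  have IH: "subtree (attach T P w) G"
    using insert.IH insert.prems by auto
  have "attach T (insert v P) w = (insert v (verts (attach T P w)), insert {v, w} (edges (attach T P w)))"
    by (simp add: attach_def)
  moreover have "subtree (insert v (verts (attach T P w)), insert {v, w} (edges (attach T P w))) G"
    using subtree_pend[OF IH] insert by auto
  ultimately show ?case by simp
qed

lemma degree_ne1:
  assumes "finite (edges T)" "{v, a} \<in> edges T" "{v, b} \<in> edges T" "a \<noteq> b"
  shows "degree T v \<noteq> 1"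
proof -
  have "{v, a} \<noteq> {v, b}" using assms(4) by (metis doubleton_eq_iff)
  hence "card {{v, a}, {v, b}} = 2" by simp
  moreover have "{{v, a}, {v, b}} \<subseteq> {e \<in> edges T. v \<in> e}" using assms by auto
  moreover have "finite {e \<in> edges T. v \<in> e}" using assms(1) by simp
  ultimately have "card {e \<in> edges T. v \<in> e} \<ge> 2" by (metis card_mono)
  thus ?thesis unfolding degree_def by simp
qed




lemma ci_intro:
  assumes st: "\<And>p. p < k \<Longrightarrow> steiner_tree G S (Ts p)"
    and ed: "\<And>p q. p < k \<Longrightarrow> q < k \<Longrightarrow> p \<noteq> q \<Longrightarrow> edges (Ts p) \<inter> edges (Ts q) = {}"
    and vs: "\<And>p q. p < k \<Longrightarrow> q < k \<Longrightarrow> p \<noteq> q \<Longrightarrow> verts (Ts p) \<inter> verts (Ts q) = S"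
    and nd: "\<And>p q. p < k \<Longrightarrow> q < k \<Longrightarrow> p \<noteq> q \<Longrightarrow> N p \<inter> N q = {}"
    and lf: "\<And>p v e1 e2. p < k \<Longrightarrow> v \<notin> N p \<Longrightarrow> e1 \<in> edges (Ts p) \<Longrightarrow> e2 \<in> edges (Ts p) \<Longrightarrow>
       v \<in> e1 \<Longrightarrow> v \<in> e2 \<Longrightarrow> e1 = e2"
  shows "completely_independent G S k Ts"
proof -
  have int: "interior xs \<subseteq> N p" if pk: "p < k" and pth: "is_path (Ts p) x y xs" for p x y xs
  proof
    fix z assume "z \<in> interior xs"
    then obtain a b where ab: "a \<noteq> b" "{z, a} \<in> edges (Ts p)" "{z, b} \<in> edges (Ts p)"
      using interior_two_nbrs[OF pth] by blast
    show "z \<in> N p"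
    proof (rule ccontr)
      assume "z \<notin> N p"
      hence "{z, a} = {z, b}" using lf[OF pk _ ab(2,3)] by auto
      thus False using ab(1) by (metis doubleton_eq_iff)
    qed
  qed
  show ?thesis unfolding completely_independent_def
  proof (intro conjI allI impI ballI)
    fix p q x1 x2 xs ys
    assume pq: "p < k" "q < k" "p < q" and "is_path (Ts p) x1 x2 xs" "is_path (Ts q) x1 x2 ys"
    thus "interior xs \<inter> interior ys = {}" using int[of p] int[of q] nd[of p q] by fastforce
  qed (use st ed vs in auto)
qed

lemma ci_bound:
  assumes ci: "completely_independent G S k Ts" and fin: "finite (edges G)"
    and xy: "x \<in> S" "y \<in> S" "x \<noteq> y"
  shows "k \<le> card (edges G)"
proof -
  have ex: "\<exists>e. e \<in> edges (Ts p)" if p: "p < k" for p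
  proof -
    have st: "steiner_tree G S (Ts p)" using ci p unfolding completely_independent_def by auto
    hence "x \<in> verts (Ts p)" "y \<in> verts (Ts p)" "subtree (Ts p) G" using xy unfolding steiner_tree_def by auto
    then obtain xs where xs: "is_path (Ts p) x y xs" unfolding subtree_def by blast
    hence "xs \<noteq> []" "hd xs = x" "last xs = y" unfolding is_path_def by auto
    hence "Suc 0 < length xs" using xy(3)
      by (metis Suc_lessI hd_conv_nth last_conv_nth length_greater_0_conv diff_Suc_1)
    thus ?thesis using xs unfolding is_path_def by blast
  qed
  define f where "f p = (SOME e. e \<in> edges (Ts p))" for p
  have fin_: "f p \<in> edges (Ts p)" if "p < k" for p using ex[OF that] unfolding f_def by (metis someI_ex)
  have "inj_on f {..<k}"
  proof (rule inj_onI)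
    fix p q assume "p \<in> {..<k}" "q \<in> {..<k}" "f p = f q"
    thus "p = q" using fin_[of p] fin_[of q] ci unfolding completely_independent_def
      by (metis disjoint_iff lessThan_iff linorder_neqE_nat)
  qed
  moreover have "f ` {..<k} \<subseteq> edges G"
  proof
    fix e assume "e \<in> f ` {..<k}"
    then obtain p where "p < k" "e = f p" by auto
    moreover have "subtree (Ts p) G" using ci \<open>p < k\<close> unfolding completely_independent_def steiner_tree_def by auto
    ultimately show "e \<in> edges G" using fin_ unfolding subtree_def subgraph_def by blast
  qed
  ultimately have "card {..<k} \<le> card (edges G)" using card_inj_on_le fin by blast
  thus ?thesis by simp
qed

lemma kappa_ge:
  assumes ci: "completely_independent G S k Ts" and fin: "finite (edges G)"
    and xy: "x \<in> S" "y \<in> S" "x \<noteq> y"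
  shows "k \<le> kappa_star G S"
  unfolding kappa_star_def
proof (rule cSup_upper)
  show "k \<in> {k. \<exists>Ts. completely_independent G S k Ts}" using ci by auto
  show "bdd_above {k. \<exists>Ts. completely_independent G S k Ts}"
    using ci_bound[OF _ fin xy] by (auto intro!: bdd_aboveI)
qed




lemma kb_verts_Inl[simp]: "Inl a \<in> verts (Kbip m1 m2) \<longleftrightarrow> 1 \<le> a \<and> a \<le> m1"
  by (auto simp: Kbip_def)
lemma kb_verts_Inr[simp]: "Inr a \<in> verts (Kbip m1 m2) \<longleftrightarrow> 1 \<le> a \<and> a \<le> m2"
  by (auto simp: Kbip_def)
lemma kb_edge1[simp]: "{Inl a, Inr b} \<in> edges (Kbip m1 m2) \<longleftrightarrow> (1 \<le> a \<and> a \<le> m1) \<and> (1 \<le> b \<and> b \<le> m2)"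
  by (auto simp: Kbip_def doubleton_eq_iff)
lemma kb_edge2[simp]: "{Inr b, Inl a} \<in> edges (Kbip m1 m2) \<longleftrightarrow> (1 \<le> a \<and> a \<le> m1) \<and> (1 \<le> b \<and> b \<le> m2)"
  by (simp add: insert_commute)
lemma kb_fin: "finite (edges (Kbip m1 m2))"
proof -
  have "edges (Kbip m1 m2) = (\<lambda>(a, b). {Inl a, Inr b}) ` ({1..m1} \<times> {1..m2})"
    by (auto simp: Kbip_def) blast
  thus ?thesis by simp
qed

locale constr =
  fixes i t c q b :: nat
  assumes i1: "1 \<le> i" and qi: "2 * q \<le> i" and ct: "c + i \<le> t" and qt: "0 < q \<Longrightarrow> 2 * (c + q) \<le> t"
begin

abbreviation "r \<equiv> c + q"

lemma qt': "q = 0 \<or> 2 * (c + q) \<le> t" using qt by auto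
abbreviation "G \<equiv> Kbip (i + c + b) (t + b)"
abbreviation "S \<equiv> Inl ` {1..i} \<union> Inr ` {1..t}"

definition "xf p = (Inl (i + 1 + p) :: nat + nat)"
definition "xd j = (Inl (i + c + 1 + j) :: nat + nat)"
definition "yd j = (Inr (t + 1 + j) :: nat + nat)"
definition "hx j = (Inl (j + 1) :: nat + nat)"
definition "gx j = (Inl (q + j + 1) :: nat + nat)"
definition "uy l = (Inr (l + 1) :: nat + nat)"
definition "vy l = (Inr (c + q + l + 1) :: nat + nat)"

definition "XS = (Inl ` {1..i} :: (nat + nat) set)"
definition "YS = (Inr ` {1..t} :: (nat + nat) set)"
definition "HS = (Inl ` {1..q} :: (nat + nat) set)"
definition "GS = (Inl ` {q+1..2*q} :: (nat + nat) set)"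
definition "MS = (Inl ` {2*q+1..i} :: (nat + nat) set)"
definition "US = (Inr ` {1..c+q} :: (nat + nat) set)"
definition "VS = (Inr ` {c+q+1..2*(c+q)} :: (nat + nat) set)"
definition "ES = (Inr ` {2*(c+q)+1..t} :: (nat + nat) set)"

lemmas vdefs = xf_def xd_def yd_def hx_def gx_def uy_def vy_def
lemmas sdefs = XS_def YS_def HS_def GS_def MS_def US_def VS_def ES_def

definition "TT p = attach (attach (attach ({xf p}, {}) YS (xf p)) (HS \<union> MS) (uy p)) GS (vy p)"

definition "QQ j = attach (attach (attach (attach (attach (attach (attach (attach
   ({hx j}, {}) {uy (c + j)} (hx j)) {gx j} (uy (c + j))) {vy (c + j)} (gx j))
   (US - {uy (c + j)}) (gx j)) (VS - {vy (c + j)}) (hx j)) ES (hx j))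
   (HS - {hx j} \<union> MS) (uy (c + j))) (GS - {gx j}) (vy (c + j))"

definition "DD j = attach (attach ({xd j}, {}) (YS \<union> {yd j}) (xd j)) XS (yd j)"

lemma XS_split: "XS = HS \<union> GS \<union> MS"
  using qi unfolding sdefs by (auto simp: image_iff)

lemma YS_split: "0 < q \<Longrightarrow> YS = US \<union> VS \<union> ES"
  using qt unfolding sdefs by (auto simp: image_iff)

lemma sub_TT: "p < c \<Longrightarrow> subtree (TT p) G"
  unfolding TT_def
  apply (rule subtree_attach, simp add: sdefs)+
  apply (rule subtree_single)
  using ct qi qt' by (auto simp: vdefs sdefs)

lemma sub_QQ: "j < q \<Longrightarrow> subtree (QQ j) G"
  unfolding QQ_def
  apply (rule subtree_attach, simp add: sdefs)+
  apply (rule subtree_single)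
  using ct qi qt' by (auto simp: vdefs sdefs)

lemma sub_DD: "j < b \<Longrightarrow> subtree (DD j) G"
  unfolding DD_def
  apply (rule subtree_attach, simp add: sdefs)+
  apply (rule subtree_single)
  using ct qi qt' by (auto simp: vdefs sdefs)

lemma verts_TT: "p < c \<Longrightarrow> verts (TT p) = S \<union> {xf p}"
  unfolding TT_def using XS_split by (auto simp: sdefs)

lemma verts_QQ: "j < q \<Longrightarrow> verts (QQ j) = S"
  unfolding QQ_def using XS_split YS_split qt' by (auto simp: vdefs sdefs)

lemma verts_DD: "j < b \<Longrightarrow> verts (DD j) = S \<union> {xd j, yd j}"
  unfolding DD_def by (auto simp: sdefs)

definition ow :: "nat \<Rightarrow> nat \<Rightarrow> nat" where
"ow a y = (if i + c < a then c + q + (a - i - c - 1)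
  else if t < y then c + q + (y - t - 1)
  else if i < a then a - i - 1
  else if y \<le> c + q then (if q < a \<and> a \<le> 2*q then c + (a - q - 1) else y - 1)
  else if y \<le> 2*(c+q) then (if a \<le> q then c + (a - 1) else y - (c+q) - 1)
  else c + (a - 1))"

definition "owned n e = (\<exists>a y. e = {Inl a, Inr y} \<and> ow a y = n)"

lemma owned1[simp]: "owned n {Inl a, Inr y} \<longleftrightarrow> ow a y = n"
  unfolding owned_def by (auto simp: doubleton_eq_iff)
lemma owned2[simp]: "owned n {Inr y, Inl a} \<longleftrightarrow> ow a y = n"
  by (simp add: insert_commute)
lemma owned_uniq: "owned n e \<Longrightarrow> owned n' e \<Longrightarrow> n = n'"
  unfolding owned_def by (auto simp: doubleton_eq_iff)

lemma own_TT: "p < c \<Longrightarrow> \<forall>e\<in>edges (TT p). owned p e"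
  unfolding TT_def using qi ct qt by (auto simp: vdefs sdefs ow_def)

lemma own_QQ: "j < q \<Longrightarrow> \<forall>e\<in>edges (QQ j). owned (c + j) e"
  unfolding QQ_def using qt[of] ct qi by (auto simp: vdefs sdefs ow_def)

lemma own_DD: "j < b \<Longrightarrow> \<forall>e\<in>edges (DD j). owned (c + q + j) e"
  unfolding DD_def using ct qi by (auto simp: vdefs sdefs ow_def)

definition "parT p v = (case v of Inr y \<Rightarrow> xf p | Inl a \<Rightarrow> if q < a \<and> a \<le> 2*q then vy p else uy p)"
definition "parQ j v = (case v of Inr y \<Rightarrow> if y \<le> c+q then gx j else hx j
   | Inl a \<Rightarrow> if q < a \<and> a \<le> 2*q then vy (c+j) else uy (c+j))"
definition "parD j v = (case v of Inr y \<Rightarrow> xd j | Inl a \<Rightarrow> yd j)"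

lemma leaf_TT: "p < c \<Longrightarrow> e \<in> edges (TT p) \<Longrightarrow> v \<in> e \<Longrightarrow> v \<notin> {xf p, uy p} \<union> (if 0 < q then {vy p} else {}) \<Longrightarrow> e = {v, parT p v}"
  unfolding TT_def using qi ct by (auto simp: vdefs sdefs parT_def)

lemma leaf_QQ: "j < q \<Longrightarrow> e \<in> edges (QQ j) \<Longrightarrow> v \<in> e \<Longrightarrow> v \<notin> {hx j, gx j, uy (c+j), vy (c+j)} \<Longrightarrow> e = {v, parQ j v}"
  unfolding QQ_def using qt ct qi by (auto simp: vdefs sdefs parQ_def)

lemma leaf_DD: "j < b \<Longrightarrow> e \<in> edges (DD j) \<Longrightarrow> v \<in> e \<Longrightarrow> v \<notin> {xd j, yd j} \<Longrightarrow> e = {v, parD j v}"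
  unfolding DD_def by (auto simp: vdefs sdefs parD_def)

end


context constr begin
definition "Tr n = (if n < c then TT n else if n < c + q then QQ (n - c) else DD (n - c - q))"
definition "NN n = (if n < c then {xf n, uy n} \<union> (if 0 < q then {vy n} else {}) else if n < c + q then {hx (n - c), gx (n - c), uy n, vy n}
   else {xd (n - c - q), yd (n - c - q)})"
definition "EXT n = (if n < c then {xf n} else if n < c + q then {} else {xd (n - c - q), yd (n - c - q)})"

lemma DD_edges: "j < b \<Longrightarrow> {Inr 1, xd j} \<in> edges (DD j) \<and> {yd j, xd j} \<in> edges (DD j) \<and> {Inl 1, yd j} \<in> edges (DD j)"
proof -
  have "Inr 1 \<in> YS" "Inl 1 \<in> XS" using ct i1 by (auto simp: sdefs)
  thus ?thesis unfolding DD_def by auto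
qed

lemma own_Tr: "n < c + q + b \<Longrightarrow> e \<in> edges (Tr n) \<Longrightarrow> owned n e"
  unfolding Tr_def using own_TT[of n] own_QQ[of "n - c"] own_DD[of "n - c - q"]
  by (auto split: if_splits)

lemma verts_Tr: "n < c + q + b \<Longrightarrow> verts (Tr n) = S \<union> EXT n"
  unfolding Tr_def EXT_def using verts_TT[of n] verts_QQ[of "n - c"] verts_DD[of "n - c - q"]
  by (auto split: if_splits)

lemma EXT_S: "EXT n \<inter> S = {}"
  unfolding EXT_def by (auto simp: vdefs)

lemma EXT_disj: "n \<noteq> n' \<Longrightarrow> EXT n \<inter> EXT n' = {}"
  unfolding EXT_def by (auto simp: vdefs split: if_splits)

lemma NN_disj: "n \<noteq> n' \<Longrightarrow> NN n \<inter> NN n' = {}"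
  using qi ct qt unfolding NN_def by (auto simp: vdefs split: if_splits)

lemma leaf_Tr: "n < c + q + b \<Longrightarrow> v \<notin> NN n \<Longrightarrow> e1 \<in> edges (Tr n) \<Longrightarrow> e2 \<in> edges (Tr n) \<Longrightarrow>
   v \<in> e1 \<Longrightarrow> v \<in> e2 \<Longrightarrow> e1 = e2"
proof -
  assume a: "n < c + q + b" "v \<notin> NN n" "e1 \<in> edges (Tr n)" "e2 \<in> edges (Tr n)" "v \<in> e1" "v \<in> e2"
  show "e1 = e2"
  proof (cases "n < c")
    case True thus ?thesis using a leaf_TT[of n e1 v] leaf_TT[of n e2 v] unfolding Tr_def NN_def by simp
  next
    case F1: False
    show ?thesis
    proof (cases "n < c + q")
      case True
      hence "c + (n - c) = n" "n - c < q" using F1 by auto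
      thus ?thesis using a leaf_QQ[of "n - c" e1 v] leaf_QQ[of "n - c" e2 v] F1 True unfolding Tr_def NN_def by simp
    next
      case False
      thus ?thesis using a leaf_DD[of "n - c - q" e1 v] leaf_DD[of "n - c - q" e2 v] F1 unfolding Tr_def NN_def by simp
    qed
  qed
qed

lemma sub_Tr: "n < c + q + b \<Longrightarrow> subtree (Tr n) G"
  unfolding Tr_def using sub_TT[of n] sub_QQ[of "n - c"] sub_DD[of "n - c - q"] by auto

lemma fin_Tr: "n < c + q + b \<Longrightarrow> finite (edges (Tr n))"
  using sub_Tr[of n] kb_fin unfolding subtree_def subgraph_def by (meson finite_subset)

lemma steiner_Tr: "n < c + q + b \<Longrightarrow> steiner_tree G S (Tr n)"
proof -
  assume n: "n < c + q + b"
  have t1: "1 \<le> t" "1 \<le> i" using ct i1 by auto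
  have sub: "subtree (Tr n) G"
    unfolding Tr_def using sub_TT[of n] sub_QQ[of "n - c"] sub_DD[of "n - c - q"] n by auto
  moreover have "S \<subseteq> verts (Tr n)" using verts_Tr[OF n] by auto
  moreover have "v \<in> S" if v: "v \<in> verts (Tr n)" "degree (Tr n) v = 1" for v
  proof (rule ccontr)
    assume vS: "v \<notin> S"
    hence vE: "v \<in> EXT n" using v verts_Tr[OF n] by auto
    show False
    proof (cases "n < c")
      case True
      hence "v = xf n" using vE unfolding EXT_def by auto
      moreover have "{xf n, Inr 1} \<in> edges (Tr n)" "{xf n, Inr 2} \<in> edges (Tr n)"
        using True ct i1 unfolding Tr_def TT_def by (auto simp: sdefs insert_commute)
      ultimately show False using degree_ne1[OF fin_Tr[OF n]] v(2) by fastforce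
    next
      case F1: False
      hence nq: "\<not> n < c + q" using vE unfolding EXT_def by (auto split: if_splits)
      hence vv: "v = xd (n - c - q) \<or> v = yd (n - c - q)" using vE F1 unfolding EXT_def by auto
      have "{xd (n - c - q), Inr 1} \<in> edges (Tr n)" "{xd (n - c - q), yd (n - c - q)} \<in> edges (Tr n)"
           "{yd (n - c - q), Inl 1} \<in> edges (Tr n)" "{yd (n - c - q), xd (n - c - q)} \<in> edges (Tr n)"
      proof -
        have j: "n - c - q < b" using n nq by auto
        have "Tr n = DD (n - c - q)" using F1 nq unfolding Tr_def by auto
        thus "{xd (n - c - q), Inr 1} \<in> edges (Tr n)" "{xd (n - c - q), yd (n - c - q)} \<in> edges (Tr n)"
           "{yd (n - c - q), Inl 1} \<in> edges (Tr n)" "{yd (n - c - q), xd (n - c - q)} \<in> edges (Tr n)"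
          using DD_edges[OF j] by (simp_all add: insert_commute)
      qed
      moreover have "Inr 1 \<noteq> yd (n - c - q)" "Inl 1 \<noteq> xd (n - c - q)" using t1 by (auto simp: vdefs)
      ultimately show False using vv degree_ne1[OF fin_Tr[OF n]] v(2) by metis
    qed
  qed
  ultimately show ?thesis unfolding steiner_tree_def by auto
qed

lemma ci_Tr: "completely_independent G S (c + q + b) Tr"
proof (rule ci_intro[where N = NN])
  show "\<And>p. p < c + q + b \<Longrightarrow> steiner_tree G S (Tr p)" by (rule steiner_Tr)
  show "\<And>p v e1 e2. p < c + q + b \<Longrightarrow> v \<notin> NN p \<Longrightarrow> e1 \<in> edges (Tr p) \<Longrightarrow> e2 \<in> edges (Tr p) \<Longrightarrow>
       v \<in> e1 \<Longrightarrow> v \<in> e2 \<Longrightarrow> e1 = e2" by (rule leaf_Tr)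
next
  fix p q' assume pq: "p < c + q + b" "q' < c + q + b" "p \<noteq> q'"
  show "edges (Tr p) \<inter> edges (Tr q') = {}" using own_Tr[OF pq(1)] own_Tr[OF pq(2)] owned_uniq[of p _ q'] pq(3) by blast
  have gen: "\<And>A B (X::(nat+nat) set). A \<inter> X = {} \<Longrightarrow> B \<inter> X = {} \<Longrightarrow> A \<inter> B = {} \<Longrightarrow> (X \<union> A) \<inter> (X \<union> B) = X"
    by auto
  show "verts (Tr p) \<inter> verts (Tr q') = S" unfolding verts_Tr[OF pq(1)] verts_Tr[OF pq(2)]
    by (rule gen[OF EXT_S[of p] EXT_S[of q'] EXT_disj[OF pq(3)]])
  show "NN p \<inter> NN q' = {}" using NN_disj[OF pq(3)] .
qed

lemma kappa_Tr: "c + q + b \<le> kappa_star G S"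
  by (rule kappa_ge[OF ci_Tr kb_fin, of "Inl 1" "Inr 1"]) (use i1 ct in auto)

end



theorem theorem3p6:
  fixes m1 m2 s i :: nat
  assumes "2 \<le> m1" "m1 \<le> m2"
    and "max 1 (int s - int m2) \<le> int i" "int i \<le> min (int m1) (int s - 1)"
    and "int s \<ge> int m2 - int m1 + 3"
    and "2 \<le> 2 * int i" "2 * int i \<le> int m1 + int s - int m2"
  shows "int (kappa_star (Kbip m1 m2) (Inl ` {1..i} \<union> Inr ` {1..s - i})) \<ge>
    (if real (2 * i) \<le> 2 * (real m1 + real s - real m2) / 3
     then int m1 - int i
     else int m2 - (int s - int i) + \<lfloor>(real m1 + real s - real m2 - real i) / 2\<rfloor>)"
proof -
  define t where "t = s - i"
  define b where "b = m2 - t"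
  define c where "c = m1 - i - b"
  define q where "q = (if i \<le> c then 0 else (i - c) div 2)"
  have h: "1 \<le> i" "i \<le> m1" "i + 1 \<le> s" "s \<le> m2 + i" "2 * i + m2 \<le> m1 + s" "m1 \<le> m2"
    using assms by linarith+
  have tt: "t + b = m2" "i + c + b = m1" "c + i \<le> t" "int c = int m1 + int s - int m2 - 2 * int i"
    using h unfolding t_def b_def c_def by linarith+
  have loc: "constr i t c q"
  proof
    show "1 \<le> i" by (rule h(1))
    show "2 * q \<le> i" unfolding q_def by auto
    show "c + i \<le> t" by (rule tt(3))
    show "2 * (c + q) \<le> t" if "0 < q"
    proof -
      have "i > c" "2 * q \<le> i - c" using that unfolding q_def by (auto split: if_splits)
      thus ?thesis using tt(3) by arith
    qed
  qed
  have k: "c + q + b \<le> kappa_star (Kbip (i + c + b) (t + b)) (Inl ` {1..i} \<union> Inr ` {1..t})"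
    by (rule constr.kappa_Tr[OF loc])
  hence k': "c + q + b \<le> kappa_star (Kbip m1 m2) (Inl ` {1..i} \<union> Inr ` {1..s - i})"
    using tt(1,2) unfolding t_def by simp
  show ?thesis
  proof (cases "real (2 * i) \<le> 2 * (real m1 + real s - real m2) / 3")
    case True
    hence "3 * real i \<le> real m1 + real s - real m2" by simp
    hence "real_of_int (3 * int i) \<le> real_of_int (int m1 + int s - int m2)" by simp
    hence "3 * int i \<le> int m1 + int s - int m2" by (simp only: of_int_le_iff)
    hence "i \<le> c" using tt(4) by linarith
    hence "q = 0" unfolding q_def by simp
    thus ?thesis using True k' tt(2) by simp
  next
    case False
    hence "\<not> 3 * real i \<le> real m1 + real s - real m2" by simp
    hence "\<not> real_of_int (3 * int i) \<le> real_of_int (int m1 + int s - int m2)" by simp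
    hence "\<not> 3 * int i \<le> int m1 + int s - int m2" by (metis of_int_le_iff)
    hence ic: "\<not> i \<le> c" using tt(4) by linarith
    hence qq: "c + q = (c + i) div 2" unfolding q_def by auto
    have rc: "real c = real m1 + real s - real m2 - 2 * real i"
      using arg_cong[OF tt(4), of real_of_int] by simp
    have "(real m1 + real s - real m2 - real i) / 2 = real (c + i) / real (2::nat)"
      using rc by simp
    hence fl: "\<lfloor>(real m1 + real s - real m2 - real i) / 2\<rfloor> = int ((c + i) div 2)"
      by (simp only: floor_divide_of_nat_eq)
    have bb: "int m2 - (int s - int i) = int b" using tt(1) h unfolding t_def by linarith
    have "int (c + q + b) \<le> int (kappa_star (Kbip m1 m2) (Inl ` {1..i} \<union> Inr ` {1..s - i}))"
      using k' by simp
    hence "int b + int ((c + i) div 2) \<le> int (kappa_star (Kbip m1 m2) (Inl ` {1..i} \<union> Inr ` {1..s - i}))"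
      using qq by simp
    thus ?thesis using False unfolding fl bb by simp
  qed
qed


end
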